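(* Let $w\in W$ and $\alpha\in\Phi^+\cap w\Phi^-$. Then $\ell(\sigma_\alpha w)=\ell(w)-1$ if and only if there do not exist $\beta,\delta\in\Phi^+\cap w\Phi^-$ with $\alpha=\beta+\delta$. Similarly, for $\alpha\in\Phi^+\cap w\Phi^+$, $\ell(\sigma_\alpha w)=\ell(w)+1$ if and only if there do not exist $\beta,\delta\in\Phi^+\cap w\Phi^+$ with $\alpha=\beta+\delta$.
   Context: $\Phi$ is a simply laced (reduced, irreducible ADE) root system with positive roots $\Phi^+$, $\Phi^-=-\Phi^+$, Weyl group $W$, length function $\ell$, and $\sigma_\alpha$ the reflection in $\alpha$. *)

theory Defs
  imports "HOL-Analysis.Analysis"
begin

definition refl :: "'a::real_inner \<Rightarrow> 'a \<Rightarrow> 'a" where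
  "refl a x = x - ((2 * (x \<bullet> a)) / (a \<bullet> a)) *\<^sub>R a"

definition root_system :: "'a::euclidean_space set \<Rightarrow> bool" where
  "root_system R \<longleftrightarrow> finite R \<and> 0 \<notin> R \<and> span R = UNIV
     \<and> (\<forall>a\<in>R. refl a ` R = R)
     \<and> (\<forall>a\<in>R. \<forall>b\<in>R. (2 * (b \<bullet> a)) / (a \<bullet> a) \<in> \<int>)"

definition reduced :: "'a::euclidean_space set \<Rightarrow> bool" where
  "reduced R \<longleftrightarrow> (\<forall>a\<in>R. \<forall>c::real. c *\<^sub>R a \<in> R \<longrightarrow> c = 1 \<or> c = -1)"

definition irreducible_rs :: "'a::euclidean_space set \<Rightarrow> bool" where
  "irreducible_rs R \<longleftrightarrow> R \<noteq> {} \<and> \<not> (\<exists>A B. A \<noteq> {} \<and> B \<noteq> {} \<and> A \<union> B = R \<and> A \<inter> B = {}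
       \<and> (\<forall>a\<in>A. \<forall>b\<in>B. a \<bullet> b = 0))"

definition simply_laced_root_system :: "'a::euclidean_space set \<Rightarrow> bool" where
  "simply_laced_root_system R \<longleftrightarrow> root_system R \<and> reduced R \<and> irreducible_rs R
     \<and> (\<forall>a\<in>R. \<forall>b\<in>R. a \<bullet> a = b \<bullet> b)"

definition positive_system :: "'a::euclidean_space set \<Rightarrow> 'a set \<Rightarrow> bool" where
  "positive_system R P \<longleftrightarrow> (\<exists>v. (\<forall>a\<in>R. v \<bullet> a \<noteq> 0) \<and> P = {a\<in>R. v \<bullet> a > 0})"

definition simple_system :: "'a::euclidean_space set \<Rightarrow> 'a set \<Rightarrow> bool" where
  "simple_system P D \<longleftrightarrow> D \<subseteq> P \<and> independent D \<and>
     (\<forall>a\<in>P. \<exists>c. (\<forall>d\<in>D. c d \<ge> 0) \<and> a = (\<Sum>d\<in>D. c d *\<^sub>R d))"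

inductive_set weyl_group :: "'a::euclidean_space set \<Rightarrow> ('a \<Rightarrow> 'a) set" for R where
  weyl_id: "id \<in> weyl_group R"
| weyl_step: "a \<in> R \<Longrightarrow> w \<in> weyl_group R \<Longrightarrow> refl a \<circ> w \<in> weyl_group R"

definition weyl_length :: "'a::euclidean_space set \<Rightarrow> ('a \<Rightarrow> 'a) \<Rightarrow> nat" where
  "weyl_length D w = (LEAST n. \<exists>ds. length ds = n \<and> set ds \<subseteq> D \<and>
      w = foldr (\<lambda>d f. refl d \<circ> f) ds id)"

end

theory Submission
  imports Defs
begin

lemma refl_add: "refl a (x + y) = refl a x + refl a y"
  by (simp add: refl_def inner_add_left add_divide_distrib algebra_simps scaleR_add_left)
lemma refl_scale: "refl a (c *\<^sub>R x) = c *\<^sub>R refl a x"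
  by (simp add: refl_def algebra_simps)
lemma refl_neg: "refl a (- x) = - refl a x"
  by (simp add: refl_def)
lemma refl_diff: "refl a (x - y) = refl a x - refl a y"
  by (simp add: refl_def inner_diff_left diff_divide_distrib algebra_simps)
lemma linear_refl: "linear (refl a)"
  by (rule linearI) (simp_all add: refl_add refl_scale)
lemma refl_self: "a \<noteq> 0 \<Longrightarrow> refl a a = - a"
  by (simp add: refl_def algebra_simps scaleR_2)
lemma refl_inner_a: "a \<noteq> 0 \<Longrightarrow> refl a x \<bullet> a = - (x \<bullet> a)"
  by (simp add: refl_def inner_diff_left)
lemma refl_refl: "a \<noteq> 0 \<Longrightarrow> refl a (refl a x) = x"
proof -
  assume a: "a \<noteq> 0"
  have "refl a (refl a x) = refl a x - ((2 * (refl a x \<bullet> a)) / (a \<bullet> a)) *\<^sub>R a"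
    by (simp add: refl_def)
  also have "\<dots> = x" using a by (simp add: refl_inner_a) (simp add: refl_def)
  finally show ?thesis .
qed
lemma refl_inner: "a \<noteq> 0 \<Longrightarrow> refl a x \<bullet> refl a y = x \<bullet> y"
  by (simp add: refl_def inner_diff_left inner_diff_right algebra_simps power2_eq_square inner_commute)
lemma refl_uminus_root: "refl (- a) = refl a"
  by (rule ext) (simp add: refl_def)
lemma refl_conj: assumes d: "d \<noteq> 0" and b: "b \<noteq> 0"
  shows "refl (refl d b) = refl d \<circ> refl b \<circ> refl d"
proof
  fix x
  have nb: "refl d b \<bullet> refl d b = b \<bullet> b" using d by (rule refl_inner)
  have xb: "x \<bullet> refl d b = refl d x \<bullet> b"
    using refl_inner[OF d, of "refl d x" b] d by (simp add: refl_refl)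
  have "(refl d \<circ> refl b \<circ> refl d) x = refl d (refl d x - ((2 * (refl d x \<bullet> b)) / (b \<bullet> b)) *\<^sub>R b)"
    by (simp add: refl_def)
  also have "\<dots> = x - ((2 * (refl d x \<bullet> b)) / (b \<bullet> b)) *\<^sub>R refl d b"
    by (simp add: refl_diff refl_scale refl_refl d)
  also have "\<dots> = refl (refl d b) x"
    by (subst refl_def[of "refl d b" x]) (simp only: nb xb)
  finally show "refl (refl d b) x = (refl d \<circ> refl b \<circ> refl d) x" ..
qed

definition wd :: "'a::real_inner list \<Rightarrow> 'a \<Rightarrow> 'a" where
  "wd ds = foldr (\<lambda>d f. refl d \<circ> f) ds id"
lemma wd_Nil[simp]: "wd [] = id" by (simp add: wd_def)
lemma wd_Cons[simp]: "wd (d # ds) = refl d \<circ> wd ds" by (simp add: wd_def)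
lemma wd_append: "wd (xs @ ys) = wd xs \<circ> wd ys"
  by (induction xs) (simp_all add: o_assoc)

lemma inj_refl: "a \<noteq> 0 \<Longrightarrow> inj (refl a)"
  by (metis injI refl_refl)

locale rsys =
  fixes R P D :: "'a::euclidean_space set" and v :: 'a
  assumes finR: "finite R" and zR: "0 \<notin> R" and reflR: "\<forall>a\<in>R. refl a ` R = R"
    and red: "reduced R" and vR: "\<forall>a\<in>R. v \<bullet> a \<noteq> 0" and Pdef: "P = {a\<in>R. v \<bullet> a > 0}"
    and ss: "simple_system P D"
begin

lemma root_closed: "a \<in> R \<Longrightarrow> b \<in> R \<Longrightarrow> refl a b \<in> R"
  using reflR by blast
lemma root_nz: "a \<in> R \<Longrightarrow> a \<noteq> 0" using zR by auto
lemma neg_root: "a \<in> R \<Longrightarrow> - a \<in> R"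
  using root_closed[of a a] refl_self[of a] root_nz by auto
lemma P_sub: "P \<subseteq> R" using Pdef by auto
lemma finP: "finite P" using P_sub finR finite_subset by blast
lemma P_pos: "a \<in> P \<Longrightarrow> v \<bullet> a > 0" using Pdef by auto
lemma P_neg: "a \<in> P \<Longrightarrow> - a \<notin> P" using Pdef by auto
lemma root_cases: "a \<in> R \<Longrightarrow> a \<in> P \<or> - a \<in> P"
  using vR neg_root Pdef by (cases "v \<bullet> a > 0") auto
lemma D_sub: "D \<subseteq> P" using ss by (simp add: simple_system_def)
lemma indepD: "independent D" using ss by (simp add: simple_system_def)
lemma finD: "finite D" using indepD by (rule finiteI_independent)
lemma coeffs: "a \<in> P \<Longrightarrow> \<exists>c. (\<forall>d\<in>D. c d \<ge> 0) \<and> a = (\<Sum>d\<in>D. c d *\<^sub>R d)"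
  using ss by (simp add: simple_system_def)
lemma uniq: "(\<Sum>d\<in>D. u d *\<^sub>R d) = 0 \<Longrightarrow> d \<in> D \<Longrightarrow> u d = 0"
  using indepD finD dependent_finite by blast

lemma simple_perm:
  assumes d: "d \<in> D" and g: "g \<in> P" and gd: "g \<noteq> d"
  shows "refl d g \<in> P"
proof (rule ccontr)
  assume nP: "refl d g \<notin> P"
  have dR: "d \<in> R" using d D_sub P_sub by auto
  have gR: "g \<in> R" using g P_sub by auto
  have "- refl d g \<in> P" using root_cases[OF root_closed[OF dR gR]] nP by auto
  then obtain c' where c': "\<forall>e\<in>D. c' e \<ge> 0" "- refl d g = (\<Sum>e\<in>D. c' e *\<^sub>R e)"
    using coeffs by blast
  obtain c where c: "\<forall>e\<in>D. c e \<ge> 0" "g = (\<Sum>e\<in>D. c e *\<^sub>R e)"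
    using coeffs g by blast
  define k where "k = (2 * (g \<bullet> d)) / (d \<bullet> d)"
  have rg: "refl d g = g - k *\<^sub>R d" by (simp add: refl_def k_def)
  define u where "u e = c e + c' e - (if e = d then k else 0)" for e
  have "(\<Sum>e\<in>D. u e *\<^sub>R e) = (\<Sum>e\<in>D. c e *\<^sub>R e) + (\<Sum>e\<in>D. c' e *\<^sub>R e)
        - (\<Sum>e\<in>D. (if e = d then k else 0) *\<^sub>R e)"
    by (simp add: u_def scaleR_add_left scaleR_diff_left sum.distrib sum_subtractf)
  also have "(\<Sum>e\<in>D. (if e = d then k else 0) *\<^sub>R e) = k *\<^sub>R d"
    using d finD by (simp add: if_distrib[of "\<lambda>x. x *\<^sub>R _"] sum.delta cong: if_cong)
  also have "(\<Sum>e\<in>D. c e *\<^sub>R e) + (\<Sum>e\<in>D. c' e *\<^sub>R e) = g + - refl d g"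
    using c(2) c'(2) by simp
  also have "\<dots> = k *\<^sub>R d" using rg by simp
  finally have "(\<Sum>e\<in>D. u e *\<^sub>R e) = 0" by simp
  hence u0: "\<And>e. e \<in> D \<Longrightarrow> u e = 0" by (rule uniq)
  have ce: "\<And>e. e \<in> D \<Longrightarrow> c e *\<^sub>R e = (if e = d then c d *\<^sub>R d else 0)"
  proof -
    fix e assume e: "e \<in> D"
    show "c e *\<^sub>R e = (if e = d then c d *\<^sub>R d else 0)"
    proof (cases "e = d")
      case False
      then have "c e + c' e = 0" using u0[OF e] by (simp add: u_def)
      then have "c e = 0" using c(1) c'(1) e by (meson add_nonneg_eq_0_iff)
      then show ?thesis using False by simp
    qed simp
  qed
  have "g = (\<Sum>e\<in>D. (if e = d then c d *\<^sub>R d else 0))"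
    using c(2) ce by (simp cong: sum.cong)
  also have "\<dots> = c d *\<^sub>R d" using d finD by (simp add: sum.delta)
  finally have gc: "g = c d *\<^sub>R d" .
  have "c d = 1 \<or> c d = -1" using red dR gR gc unfolding reduced_def by blast
  then show False
  proof
    assume "c d = 1" then show False using gc gd by simp
  next
    assume "c d = -1" then have "g = - d" using gc by simp
    then show False using g d D_sub P_neg by auto
  qed
qed

lemma W_props: "w \<in> weyl_group R \<Longrightarrow> linear w \<and> inj w \<and> w ` R = R"
proof (induction rule: weyl_group.induct)
  case weyl_id then show ?case by (simp add: linear_iff)
next
  case (weyl_step a w)
  have "linear (refl a \<circ> w)" using weyl_step linear_refl linear_compose by blast
  moreover have "inj (refl a \<circ> w)" using weyl_step inj_refl root_nz inj_compose by blast
  moreover have "(refl a \<circ> w) ` R = R" using weyl_step reflR by (metis image_comp)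
  ultimately show ?case by blast
qed

lemma wd_W: "set ds \<subseteq> R \<Longrightarrow> wd ds \<in> weyl_group R"
  by (induction ds) (auto intro: weyl_group.intros)

lemma refl_WD_pos: "a \<in> P \<Longrightarrow> \<exists>ds. set ds \<subseteq> D \<and> refl a = wd ds"
proof (induction a rule: measure_induct_rule[where f="\<lambda>a. card {b\<in>P. v \<bullet> b < v \<bullet> a}"])
  case (less a)
  have aR: "a \<in> R" using less.prems P_sub by auto
  show ?case
  proof (cases "a \<in> D")
    case True
    then show ?thesis by (intro exI[of _ "[a]"]) auto
  next
    case False
    obtain c where c: "\<forall>d\<in>D. c d \<ge> 0" "a = (\<Sum>d\<in>D. c d *\<^sub>R d)"
      using coeffs less.prems by blast
    have "\<exists>d\<in>D. a \<bullet> d > 0"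
    proof (rule ccontr)
      assume "\<not> ?thesis"
      then have le: "\<forall>d\<in>D. a \<bullet> d \<le> 0" by auto
      have "a \<bullet> a = (\<Sum>d\<in>D. c d * (a \<bullet> d))"
        by (subst (2) c(2)) (simp add: inner_sum_right)
      also have "\<dots> \<le> 0" using c(1) le by (intro sum_nonpos) (simp add: mult_nonneg_nonpos)
      finally have "a = 0" by (meson antisym inner_ge_zero inner_eq_zero_iff)
      then show False using aR root_nz by blast
    qed
    then obtain d where d: "d \<in> D" "a \<bullet> d > 0" by blast
    have dP: "d \<in> P" using d D_sub by auto
    have dR: "d \<in> R" using dP P_sub by auto
    define b where "b = refl d a"
    have bP: "b \<in> P" unfolding b_def using simple_perm[OF d(1) less.prems] False d by auto
    define k where "k = (2 * (a \<bullet> d)) / (d \<bullet> d)"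
    have kpos: "k > 0" using d(2) root_nz[OF dR] by (simp add: k_def)
    have "v \<bullet> b = v \<bullet> a - k * (v \<bullet> d)" by (simp add: b_def refl_def k_def inner_diff_right)
    moreover have "v \<bullet> d > 0" using P_pos dP by auto
    ultimately have vb: "v \<bullet> b < v \<bullet> a" using kpos by simp
    have "{x\<in>P. v \<bullet> x < v \<bullet> b} \<subset> {x\<in>P. v \<bullet> x < v \<bullet> a}"
      using vb bP by auto
    then have "card {x\<in>P. v \<bullet> x < v \<bullet> b} < card {x\<in>P. v \<bullet> x < v \<bullet> a}"
      using finP by (intro psubset_card_mono) auto
    then obtain ds where ds: "set ds \<subseteq> D" "refl b = wd ds" using less.IH bP by blast
    have "refl a = refl (refl d b)" by (simp add: b_def refl_refl root_nz[OF dR])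
    also have "\<dots> = refl d \<circ> refl b \<circ> refl d" using refl_conj root_nz dR bP P_sub by blast
    also have "\<dots> = wd ([d] @ ds @ [d])" using ds by (simp add: wd_append o_assoc)
    finally show ?thesis using ds d by (intro exI[of _ "[d] @ ds @ [d]"]) auto
  qed
qed

lemma refl_WD: "a \<in> R \<Longrightarrow> \<exists>ds. set ds \<subseteq> D \<and> refl a = wd ds"
  using root_cases refl_WD_pos refl_uminus_root by metis

lemma W_WD: "w \<in> weyl_group R \<Longrightarrow> \<exists>ds. set ds \<subseteq> D \<and> w = wd ds"
proof (induction rule: weyl_group.induct)
  case weyl_id then show ?case by (intro exI[of _ "[]"]) simp
next
  case (weyl_step a w)
  then obtain ds es where "set ds \<subseteq> D" "w = wd ds" "set es \<subseteq> D" "refl a = wd es"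
    using refl_WD by metis
  then show ?case by (intro exI[of _ "es @ ds"]) (simp add: wd_append)
qed

lemma exchange:
  "set es \<subseteq> D \<Longrightarrow> d \<in> P \<Longrightarrow> d \<in> wd es ` (uminus ` P) \<Longrightarrow>
   \<exists>i<length es. refl d \<circ> wd es = wd (take i es @ drop (Suc i) es)"
proof (induction es arbitrary: d)
  case Nil then show ?case using P_neg by auto
next
  case (Cons e es)
  have eP: "e \<in> P" using Cons.prems D_sub by auto
  have e0: "e \<noteq> 0" using eP P_sub root_nz by auto
  have d0: "d \<noteq> 0" using Cons.prems P_sub root_nz by auto
  have ed: "refl e d \<in> wd es ` (uminus ` P)"
    using Cons.prems(3) by (auto simp: refl_refl[OF e0])
  show ?case
  proof (cases "d = e")
    case True
    have h: "refl d \<circ> wd (e # es) = wd es" by (rule ext) (simp add: True refl_refl[OF e0])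
    show ?thesis by (metis h drop_Suc_Cons drop0 take0 append_Nil length_Cons zero_less_Suc)
  next
    case False
    define b where "b = refl e d"
    have bP: "b \<in> P" unfolding b_def using simple_perm Cons.prems False by auto
    obtain i where i: "i < length es" "refl b \<circ> wd es = wd (take i es @ drop (Suc i) es)"
    proof -
      have "set es \<subseteq> D" using Cons.prems by simp
      moreover have "b \<in> wd es ` (uminus ` P)" using ed b_def by simp
      ultimately show ?thesis using Cons.IH[of b] bP that by blast
    qed
    have b0: "b \<noteq> 0" using bP P_sub root_nz by auto
    have "refl d = refl (refl e b)" by (simp add: b_def refl_refl e0)
    also have "\<dots> = refl e \<circ> refl b \<circ> refl e" using refl_conj e0 b0 by blast
    finally have "refl d \<circ> wd (e # es) = refl e \<circ> (refl b \<circ> wd es)"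
      by (auto simp: refl_refl[OF e0])
    also have "\<dots> = wd (e # (take i es @ drop (Suc i) es))" by (simp only: wd_Cons i(2))
    also have "e # (take i es @ drop (Suc i) es) = take (Suc i) (e # es) @ drop (Suc (Suc i)) (e # es)"
      by simp
    finally have X: "refl d \<circ> wd (e # es) = wd (take (Suc i) (e # es) @ drop (Suc (Suc i)) (e # es))" .
    have "Suc i < length (e # es)" using i by simp
    then show ?thesis using X by blast
  qed
qed

definition Xw :: "('a \<Rightarrow> 'a) \<Rightarrow> 'a \<Rightarrow> int" where
  "Xw w x = (if x \<in> w ` (uminus ` P) then 1 else 0)"
definition cnt :: "('a \<Rightarrow> 'a) \<Rightarrow> nat" where
  "cnt w = card {g\<in>P. g \<in> w ` (uminus ` P)}"

lemma cnt_sum: "int (cnt w) = (\<Sum>g\<in>P. Xw w g)"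
proof -
  have "int (cnt w) = (\<Sum>g\<in>{g\<in>P. g \<in> w ` (uminus ` P)}. 1)" by (simp add: cnt_def)
  also have "\<dots> = (\<Sum>g\<in>P. Xw w g)" unfolding Xw_def by (rule sum.inter_filter[OF finP])
  finally show ?thesis .
qed

lemma compl:
  assumes w: "w \<in> weyl_group R" and x: "x \<in> R"
  shows "(x \<in> w ` (uminus ` P)) = (x \<notin> w ` P)"
    and "(- x \<in> w ` (uminus ` P)) = (x \<notin> w ` (uminus ` P))"
proof -
  have lw: "linear w" and iw: "inj w" and rw: "w ` R = R" using W_props[OF w] by auto
  obtain y where y: "y \<in> R" "x = w y" using x rw by blast
  have m1: "(x \<in> w ` (uminus ` P)) = (y \<in> uminus ` P)" using y iw by (simp add: inj_image_mem_iff)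
  have m2: "(x \<in> w ` P) = (y \<in> P)" using y iw by (simp add: inj_image_mem_iff)
  have nx: "- x = w (- y)" using y linear_neg[OF lw] by simp
  have m3: "(- x \<in> w ` (uminus ` P)) = (- y \<in> uminus ` P)"
    unfolding nx using iw by (rule inj_image_mem_iff)
  have yQ: "(y \<in> uminus ` P) = (- y \<in> P)" by force
  have ny: "(- y \<in> uminus ` P) = (y \<in> P)" by force
  have ex: "(- y \<in> P) = (y \<notin> P)" using root_cases[OF y(1)] P_neg by force
  show "(x \<in> w ` (uminus ` P)) = (x \<notin> w ` P)" using m1 m2 yQ ex by simp
  show "(- x \<in> w ` (uminus ` P)) = (x \<notin> w ` (uminus ` P))" using m1 m3 yQ ny ex by simp
qed

lemma Xw_neg: "w \<in> weyl_group R \<Longrightarrow> x \<in> R \<Longrightarrow> Xw w (- x) = 1 - Xw w x"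
  using compl(2) by (simp add: Xw_def)

definition phi :: "'a \<Rightarrow> 'a \<Rightarrow> 'a" where
  "phi a g = (if refl a g \<in> P then refl a g else - refl a g)"

lemma phi_P: "a \<in> P \<Longrightarrow> g \<in> P \<Longrightarrow> phi a g \<in> P"
  using root_cases[OF root_closed[of a g]] P_sub by (auto simp: phi_def)

lemma phi_inv: assumes a: "a \<in> P" and g: "g \<in> P" shows "phi a (phi a g) = g"
proof -
  have a0: "a \<noteq> 0" using a P_sub root_nz by auto
  show ?thesis
  proof (cases "refl a g \<in> P")
    case True then show ?thesis using g by (simp add: phi_def refl_refl[OF a0])
  next
    case False
    have "refl a (- refl a g) = - g" by (simp add: refl_neg refl_refl[OF a0])
    then show ?thesis using False g P_neg by (simp add: phi_def)
  qed
qed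

lemma phi_C: assumes a: "a \<in> P" and g: "g \<in> P" "refl a g \<notin> P"
  shows "phi a g \<in> P \<and> refl a (phi a g) \<notin> P"
proof -
  have a0: "a \<noteq> 0" using a P_sub root_nz by auto
  have "refl a (phi a g) = - g" using g by (simp add: phi_def refl_neg refl_refl[OF a0])
  then show ?thesis using phi_P[OF a g(1)] g P_neg by simp
qed

lemma bij_phi_P: "a \<in> P \<Longrightarrow> bij_betw (phi a) P P"
  by (rule bij_betwI[where g="phi a"]) (auto simp: phi_P phi_inv)

lemma bij_phi_C: "a \<in> P \<Longrightarrow> bij_betw (phi a) {g\<in>P. refl a g \<notin> P} {g\<in>P. refl a g \<notin> P}"
  by (rule bij_betwI[where g="phi a"]) (auto simp: phi_C phi_inv)

lemma count:
  assumes w: "w \<in> weyl_group R" and a: "a \<in> P"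
  shows "int (cnt (refl a \<circ> w)) = int (cnt w) + (\<Sum>g\<in>{g\<in>P. refl a g \<notin> P}. 1 - 2 * Xw w g)"
proof -
  have a0: "a \<noteq> 0" using a P_sub root_nz by auto
  let ?C = "{g\<in>P. refl a g \<notin> P}"
  have finC: "finite ?C" using finP by simp
  have X1: "Xw (refl a \<circ> w) g = Xw w (refl a g)" for g
  proof -
    have "(g \<in> (refl a \<circ> w) ` (uminus ` P)) = (refl a g \<in> w ` (uminus ` P))"
      by (auto simp: refl_refl[OF a0] image_iff) (metis refl_refl[OF a0])
    then show ?thesis by (simp add: Xw_def)
  qed
  have X2: "Xw w (refl a g) = Xw w (phi a g) + (if refl a g \<notin> P then 1 - 2 * Xw w (phi a g) else 0)"
    if g: "g \<in> P" for g
  proof (cases "refl a g \<in> P")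
    case True then show ?thesis by (simp add: phi_def)
  next
    case False
    have pR: "phi a g \<in> R" using phi_P[OF a g] P_sub by auto
    have "refl a g = - phi a g" using False by (simp add: phi_def)
    then show ?thesis using False Xw_neg[OF w pR] by simp
  qed
  have "int (cnt (refl a \<circ> w)) = (\<Sum>g\<in>P. Xw w (refl a g))" by (simp add: cnt_sum X1)
  also have "\<dots> = (\<Sum>g\<in>P. Xw w (phi a g)) + (\<Sum>g\<in>P. (if refl a g \<notin> P then 1 - 2 * Xw w (phi a g) else 0))"
    by (simp add: X2 sum.distrib)
  also have "(\<Sum>g\<in>P. (if refl a g \<notin> P then 1 - 2 * Xw w (phi a g) else 0)) = (\<Sum>g\<in>?C. 1 - 2 * Xw w (phi a g))"
    using finP by (simp add: sum.inter_filter)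
  also have "\<dots> = (\<Sum>g\<in>?C. 1 - 2 * Xw w g)"
    using sum.reindex_bij_betw[OF bij_phi_C[OF a], of "\<lambda>g. 1 - 2 * Xw w g"] by simp
  also have "(\<Sum>g\<in>P. Xw w (phi a g)) = (\<Sum>g\<in>P. Xw w g)"
    using sum.reindex_bij_betw[OF bij_phi_P[OF a], of "Xw w"] by simp
  also have "\<dots> = int (cnt w)" by (simp add: cnt_sum)
  finally show ?thesis .
qed

lemma count_simple:
  assumes w: "w \<in> weyl_group R" and d: "d \<in> D"
  shows "int (cnt (refl d \<circ> w)) = int (cnt w) + 1 - 2 * Xw w d"
proof -
  have dP: "d \<in> P" using d D_sub by auto
  have d0: "d \<noteq> 0" using dP P_sub root_nz by auto
  have "{g\<in>P. refl d g \<notin> P} = {d}"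
    using simple_perm[OF d] dP P_neg refl_self[OF d0] by auto
  then show ?thesis using count[OF w dP] by simp
qed

lemma wdD_W: "set ds \<subseteq> D \<Longrightarrow> wd ds \<in> weyl_group R"
  using wd_W D_sub P_sub by blast

lemma Xw_cases: "Xw w x = 0 \<or> Xw w x = 1" by (simp add: Xw_def)

lemma cnt_id: "cnt id = 0"
proof -
  have "{g\<in>P. g \<in> id ` (uminus ` P)} = {}"
  proof (rule equals0I)
    fix g assume "g \<in> {g\<in>P. g \<in> id ` (uminus ` P)}"
    then obtain y where "y \<in> P" "g = - y" "g \<in> P" by auto
    then show False using P_neg by blast
  qed
  then show ?thesis unfolding cnt_def by (simp only: card.empty)
qed

lemma cnt_le: "set ds \<subseteq> D \<Longrightarrow> cnt (wd ds) \<le> length ds"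
proof (induction ds)
  case Nil then show ?case by (simp only: wd_Nil cnt_id)
next
  case (Cons d ds)
  have sd: "set ds \<subseteq> D" "d \<in> D" using Cons.prems by auto
  have c: "int (cnt (wd (d # ds))) = int (cnt (wd ds)) + 1 - 2 * Xw (wd ds) d"
    unfolding wd_Cons by (rule count_simple[OF wdD_W[OF sd(1)] sd(2)])
  have ih: "cnt (wd ds) \<le> length ds" using Cons.IH sd by blast
  from Xw_cases[of "wd ds" d] show ?case
  proof
    assume "Xw (wd ds) d = 0" then show ?thesis using c ih by (simp del: wd_Cons)
  next
    assume "Xw (wd ds) d = 1" then show ?thesis using c ih by (simp del: wd_Cons)
  qed
qed

lemma deletion: "set ds \<subseteq> D \<Longrightarrow> cnt (wd ds) < length ds \<Longrightarrow>
  \<exists>ds'. set ds' \<subseteq> D \<and> wd ds' = wd ds \<and> length ds' < length ds"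
proof (induction ds)
  case Nil then show ?case by simp
next
  case (Cons d ds)
  have sd: "set ds \<subseteq> D" "d \<in> D" using Cons.prems by auto
  show ?case
  proof (cases "cnt (wd ds) < length ds")
    case True
    then obtain ds' where "set ds' \<subseteq> D" "wd ds' = wd ds" "length ds' < length ds"
      using Cons.IH sd by blast
    then show ?thesis using sd by (intro exI[of _ "d # ds'"]) auto
  next
    case False
    then have eq: "cnt (wd ds) = length ds" using cnt_le[OF sd(1)] by simp
    have c: "int (cnt (wd (d # ds))) = int (cnt (wd ds)) + 1 - 2 * Xw (wd ds) d"
      unfolding wd_Cons by (rule count_simple[OF wdD_W[OF sd(1)] sd(2)])
    have lt: "cnt (wd (d # ds)) < Suc (length ds)" using Cons.prems(2) by (simp only: length_Cons)
    have "Xw (wd ds) d \<noteq> 0"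
    proof
      assume "Xw (wd ds) d = 0"
      then have "int (cnt (wd (d # ds))) = int (length ds) + 1" using c eq by simp
      then show False using lt by linarith
    qed
    then have "Xw (wd ds) d = 1" using Xw_cases[of "wd ds" d] by blast
    then have "d \<in> wd ds ` (uminus ` P)" by (simp add: Xw_def split: if_splits)
    then obtain i where i: "i < length ds" "refl d \<circ> wd ds = wd (take i ds @ drop (Suc i) ds)"
      using exchange[OF sd(1)] sd(2) D_sub by blast
    have "set (take i ds @ drop (Suc i) ds) \<subseteq> D"
      using sd(1) set_take_subset set_drop_subset by fastforce
    then show ?thesis using i by (intro exI[of _ "take i ds @ drop (Suc i) ds"]) auto
  qed
qed

lemma length_cnt: assumes w: "w \<in> weyl_group R" shows "weyl_length D w = cnt w"
proof -
  let ?Q = "\<lambda>n. \<exists>ds. length ds = n \<and> set ds \<subseteq> D \<and> w = foldr (\<lambda>d f. refl d \<circ> f) ds id"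
  obtain ds where "set ds \<subseteq> D" "w = wd ds" using W_WD[OF w] by blast
  then have ex: "?Q (length ds)" by (auto simp: wd_def)
  have wl: "weyl_length D w = (LEAST n. ?Q n)" by (simp add: weyl_length_def)
  have "?Q (LEAST n. ?Q n)" by (rule LeastI_ex) (use ex in blast)
  then obtain ds0 where ds0: "length ds0 = weyl_length D w" "set ds0 \<subseteq> D" "w = wd ds0"
    unfolding wl[symmetric] wd_def by blast
  have "\<not> cnt w < length ds0"
  proof
    assume "cnt w < length ds0"
    then obtain ds' where ds': "set ds' \<subseteq> D" "wd ds' = w" "length ds' < length ds0"
      using deletion[OF ds0(2)] ds0(3) by blast
    then have "?Q (length ds')" by (auto simp: wd_def)
    then show False using not_less_Least[of "length ds'" ?Q] ds' ds0(1) wl by simp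
  qed
  moreover have "cnt w \<le> length ds0" using cnt_le[OF ds0(2)] ds0(3) by simp
  ultimately show ?thesis using ds0(1) by simp
qed

lemma add_P: assumes w: "w \<in> weyl_group R" and x: "x \<in> w ` P" and y: "y \<in> w ` P" and xy: "x + y \<in> R"
  shows "x + y \<in> w ` P"
proof -
  have lw: "linear w" and iw: "inj w" and rw: "w ` R = R" using W_props[OF w] by auto
  obtain p q where pq: "p \<in> P" "q \<in> P" "x = w p" "y = w q" using x y by blast
  have e: "x + y = w (p + q)" using pq linear_add[OF lw] by simp
  obtain r where r: "r \<in> R" "x + y = w r" using xy rw by blast
  have "r = p + q" using e r iw by (metis injD)
  moreover have "v \<bullet> p > 0" "v \<bullet> q > 0" using pq P_pos by auto
  ultimately have "v \<bullet> r > 0" by (simp add: inner_add_right)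
  then have "r \<in> P" using r(1) unfolding Pdef by blast
  then show ?thesis using r by blast
qed

lemma add_Q: assumes w: "w \<in> weyl_group R" and x: "x \<in> w ` (uminus ` P)" and y: "y \<in> w ` (uminus ` P)"
    and xy: "x + y \<in> R"
  shows "x + y \<in> w ` (uminus ` P)"
proof -
  have lw: "linear w" and iw: "inj w" and rw: "w ` R = R" using W_props[OF w] by auto
  obtain p q where pq: "p \<in> P" "q \<in> P" "x = w (- p)" "y = w (- q)" using x y by blast
  have e: "x + y = w (- (p + q))" using pq linear_add[OF lw, of "- p" "- q"] by (simp add: algebra_simps)
  obtain r where r: "r \<in> R" "x + y = w r" using xy rw by blast
  have "r = - (p + q)" using e r iw by (metis injD)
  moreover have "v \<bullet> p > 0" "v \<bullet> q > 0" using pq P_pos by auto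
  ultimately have "v \<bullet> (- r) > 0" by (simp add: inner_add_right)
  then have "- r \<in> P" using neg_root[OF r(1)] unfolding Pdef by blast
  then have "r \<in> uminus ` P" by force
  then show ?thesis using r by blast
qed

context
  assumes intc: "\<forall>a\<in>R. \<forall>b\<in>R. (2 * (b \<bullet> a)) / (a \<bullet> a) \<in> \<int>"
    and eql: "\<forall>a\<in>R. \<forall>b\<in>R. a \<bullet> a = b \<bullet> b"
begin

lemma kval: assumes a: "a \<in> R" and g: "g \<in> R" and ga: "g \<noteq> a" "g \<noteq> - a"
  shows "(2 * (g \<bullet> a)) / (a \<bullet> a) \<in> {-1, 0, 1}"
proof -
  have apos: "a \<bullet> a > 0" using root_nz[OF a] by simp
  obtain m where m: "(2 * (g \<bullet> a)) / (a \<bullet> a) = of_int m" using intc a g Ints_cases by metis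
  have gg: "g \<bullet> g = a \<bullet> a" using eql a g by blast
  have "(g \<bullet> a)^2 \<le> (g \<bullet> g) * (a \<bullet> a)" by (rule Cauchy_Schwarz_ineq)
  then have "(g \<bullet> a)^2 \<le> (a \<bullet> a)^2" using gg by (simp add: power2_eq_square)
  then have abs: "\<bar>g \<bullet> a\<bar> \<le> a \<bullet> a" using apos abs_le_square_iff[of "g \<bullet> a" "a \<bullet> a"] by simp
  have ga2: "2 * (g \<bullet> a) = of_int m * (a \<bullet> a)" using m apos by (simp add: field_simps)
  have "\<bar>of_int m\<bar> * (a \<bullet> a) = \<bar>2 * (g \<bullet> a)\<bar>" using ga2 apos by (simp add: abs_mult)
  also have "\<dots> \<le> 2 * (a \<bullet> a)" using abs by simp
  finally have "\<bar>of_int m\<bar> * (a \<bullet> a) \<le> 2 * (a \<bullet> a)" .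
  then have "\<bar>(of_int m :: real)\<bar> \<le> 2" using apos by simp
  then have mb: "\<bar>m\<bar> \<le> 2" by linarith
  have "m \<noteq> 2"
  proof
    assume "m = 2"
    then have "g \<bullet> a = a \<bullet> a" using ga2 by simp
    then have "(g - a) \<bullet> (g - a) = 0" using gg by (simp add: inner_diff_left inner_diff_right inner_commute)
    then show False using ga by simp
  qed
  moreover have "m \<noteq> -2"
  proof
    assume "m = -2"
    then have "g \<bullet> a = - (a \<bullet> a)" using ga2 by simp
    then have "(g + a) \<bullet> (g + a) = 0" using gg by (simp add: inner_add_left inner_add_right inner_commute)
    then have "g = - a" by (simp add: add_eq_0_iff2)
    then show False using ga by simp
  qed
  ultimately have "m \<in> {-1, 0, 1}" using mb by auto
  then show ?thesis using m by auto
qed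

lemma C_struct: assumes a: "a \<in> P" and g: "g \<in> P" and ga: "g \<noteq> a" and nP: "refl a g \<notin> P"
  shows "refl a g = g - a"
proof -
  have aR: "a \<in> R" and gR: "g \<in> R" using a g P_sub by auto
  have gna: "g \<noteq> - a" using a g P_neg by auto
  define k where "k = (2 * (g \<bullet> a)) / (a \<bullet> a)"
  have rg: "refl a g = g - k *\<^sub>R a" by (simp add: refl_def k_def)
  have "k \<in> {-1, 0, 1}" unfolding k_def by (rule kval[OF aR gR ga gna])
  moreover have "k \<noteq> 0" using rg g nP by auto
  moreover have "k \<noteq> -1"
  proof
    assume "k = -1"
    then have e: "refl a g = g + a" using rg by simp
    have "refl a g \<in> R" using root_closed aR gR by blast
    moreover have "v \<bullet> (g + a) > 0" using P_pos[OF a] P_pos[OF g] by (simp add: inner_add_right)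
    ultimately show False using nP e unfolding Pdef by auto
  qed
  ultimately have "k = 1" by auto
  then show ?thesis using rg by simp
qed

lemma decomp: assumes a: "a \<in> P" and b: "b \<in> P" and d: "d \<in> P" and abd: "a = b + d"
  shows "b \<noteq> a \<and> refl a b \<notin> P \<and> phi a b = d"
proof -
  have aR: "a \<in> R" and bR: "b \<in> R" and dR: "d \<in> R" using a b d P_sub by auto
  have ba: "b \<noteq> a" using abd dR root_nz by auto
  have da: "d \<noteq> a" using abd bR root_nz by auto
  have bna: "b \<noteq> - a" using a b P_neg by auto
  have dna: "d \<noteq> - a" using a d P_neg by auto
  have apos: "a \<bullet> a > 0" using root_nz[OF aR] by simp
  define kb where "kb = (2 * (b \<bullet> a)) / (a \<bullet> a)"
  define kd where "kd = (2 * (d \<bullet> a)) / (a \<bullet> a)"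
  have ip: "b \<bullet> a + d \<bullet> a = a \<bullet> a" using abd by (metis inner_add_left)
  have "kb + kd = (2 * (b \<bullet> a) + 2 * (d \<bullet> a)) / (a \<bullet> a)" unfolding kb_def kd_def
    by (rule add_divide_distrib[symmetric])
  also have "2 * (b \<bullet> a) + 2 * (d \<bullet> a) = 2 * (a \<bullet> a)" using ip by linarith
  finally have s: "kb + kd = 2" using apos by simp
  have "kb \<in> {-1, 0, 1}" unfolding kb_def by (rule kval[OF aR bR ba bna])
  moreover have "kd \<in> {-1, 0, 1}" unfolding kd_def by (rule kval[OF aR dR da dna])
  ultimately have "kb = 1" using s by auto
  have "refl a b = b - kb *\<^sub>R a" by (simp add: refl_def kb_def)
  also have "\<dots> = - d" using \<open>kb = 1\<close> abd by simp
  finally have rb: "refl a b = - d" .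
  then have "refl a b \<notin> P" using d P_neg by simp
  then show ?thesis using ba rb by (simp add: phi_def)
qed

lemma phi_self: assumes a: "a \<in> P" shows "phi a a = a"
proof -
  have "refl a a = - a" using a P_sub root_nz refl_self by blast
  then show ?thesis using P_neg[OF a] by (simp add: phi_def)
qed

lemma Cp_struct: assumes a: "a \<in> P" and g: "g \<in> {g\<in>P. refl a g \<notin> P} - {a}"
  shows "phi a g = a - g" "phi a g \<in> P" "a = g + phi a g" "g \<in> P"
proof -
  have "refl a g = g - a" using C_struct a g by blast
  then show "phi a g = a - g" using g by (simp add: phi_def)
  then show "a = g + phi a g" by simp
  show "phi a g \<in> P" using phi_P a g by blast
  show "g \<in> P" using g by blast
qed

lemma sum_rewrite:
  assumes w: "w \<in> weyl_group R" and a: "a \<in> P"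
  shows "int (weyl_length D (refl a \<circ> w)) = int (weyl_length D w) + (1 - 2 * Xw w a)
     + (\<Sum>g\<in>{g\<in>P. refl a g \<notin> P} - {a}. 1 - Xw w g - Xw w (phi a g))"
proof -
  let ?C = "{g\<in>P. refl a g \<notin> P}"
  have aR: "a \<in> R" using a P_sub by auto
  have finC: "finite ?C" using finP by simp
  have "refl a a = - a" using refl_self root_nz[OF aR] by blast
  then have aC: "a \<in> ?C" using a P_neg[OF a] by simp
  have uW: "refl a \<circ> w \<in> weyl_group R" using w aR by (rule weyl_group.intros(2)[rotated])
  have re: "(\<Sum>g\<in>?C. Xw w (phi a g)) = (\<Sum>g\<in>?C. Xw w g)"
    using sum.reindex_bij_betw[OF bij_phi_C[OF a], of "Xw w"] by simp
  have "(\<Sum>g\<in>?C. 1 - 2 * Xw w g) = (\<Sum>g\<in>?C. 1 - Xw w g - Xw w (phi a g))"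
    using re by (simp add: sum_subtractf sum_distrib_left[symmetric])
  also have "\<dots> = (1 - Xw w a - Xw w (phi a a)) + (\<Sum>g\<in>?C - {a}. 1 - Xw w g - Xw w (phi a g))"
    using sum.remove[OF finC aC] by simp
  also have "1 - Xw w a - Xw w (phi a a) = 1 - 2 * Xw w a" using phi_self[OF a] by simp
  finally have "(\<Sum>g\<in>?C. 1 - 2 * Xw w g) = (1 - 2 * Xw w a) + (\<Sum>g\<in>?C - {a}. 1 - Xw w g - Xw w (phi a g))" .
  then show ?thesis using count[OF w a] length_cnt[OF w] length_cnt[OF uW] by simp
qed

lemma main1:
  assumes w: "w \<in> weyl_group R" and a: "a \<in> P" and aQ: "a \<in> w ` (uminus ` P)"
  shows "int (weyl_length D (refl a \<circ> w)) = int (weyl_length D w) - 1 \<longleftrightarrow>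
     \<not> (\<exists>b\<in>P \<inter> w ` (uminus ` P). \<exists>d\<in>P \<inter> w ` (uminus ` P). a = b + d)"
proof -
  let ?C = "{g\<in>P. refl a g \<notin> P} - {a}"
  let ?t = "\<lambda>g. 1 - Xw w g - Xw w (phi a g)"
  have aR: "a \<in> R" using a P_sub by auto
  have finC: "finite ?C" using finP by simp
  have Xa: "Xw w a = 1" using aQ by (simp add: Xw_def)
  have tnp: "?t g \<le> 0" if g: "g \<in> ?C" for g
  proof (rule ccontr)
    assume "\<not> ?t g \<le> 0"
    then have "Xw w g = 0" "Xw w (phi a g) = 0" using Xw_cases[of w g] Xw_cases[of w "phi a g"] by auto
    then have "g \<notin> w ` (uminus ` P)" "phi a g \<notin> w ` (uminus ` P)" by (auto simp: Xw_def split: if_splits)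
    moreover have gR: "g \<in> R" "phi a g \<in> R" using Cp_struct[OF a g] P_sub by auto
    ultimately have "g \<in> w ` P" "phi a g \<in> w ` P" using compl(1)[OF w] by auto
    then have "a \<in> w ` P" using add_P[OF w] Cp_struct(3)[OF a g] aR by metis
    then show False using compl(1)[OF w aR] aQ by simp
  qed
  have "int (weyl_length D (refl a \<circ> w)) = int (weyl_length D w) - 1 \<longleftrightarrow> (\<Sum>g\<in>?C. ?t g) = 0"
    using sum_rewrite[OF w a] Xa by simp
  also have "\<dots> \<longleftrightarrow> (\<Sum>g\<in>?C. - ?t g) = 0" by (simp only: sum_negf neg_equal_0_iff_equal)
  also have "\<dots> \<longleftrightarrow> (\<forall>g\<in>?C. - ?t g = 0)"
    using finC tnp by (intro sum_nonneg_eq_0_iff) auto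
  also have "\<dots> \<longleftrightarrow> \<not> (\<exists>g\<in>?C. Xw w g = 1 \<and> Xw w (phi a g) = 1)"
  proof -
    have "- ?t g = 0 \<longleftrightarrow> \<not> (Xw w g = 1 \<and> Xw w (phi a g) = 1)" if "g \<in> ?C" for g
      using tnp[OF that] Xw_cases[of w g] Xw_cases[of w "phi a g"] by auto
    then show ?thesis by blast
  qed
  also have "(\<exists>g\<in>?C. Xw w g = 1 \<and> Xw w (phi a g) = 1) \<longleftrightarrow>
     (\<exists>b\<in>P \<inter> w ` (uminus ` P). \<exists>d\<in>P \<inter> w ` (uminus ` P). a = b + d)"
  proof
    assume "\<exists>g\<in>?C. Xw w g = 1 \<and> Xw w (phi a g) = 1"
    then obtain g where g: "g \<in> ?C" "Xw w g = 1" "Xw w (phi a g) = 1" by blast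
    have "g \<in> w ` (uminus ` P)" "phi a g \<in> w ` (uminus ` P)" using g by (auto simp: Xw_def split: if_splits)
    then show "\<exists>b\<in>P \<inter> w ` (uminus ` P). \<exists>d\<in>P \<inter> w ` (uminus ` P). a = b + d"
      using Cp_struct[OF a g(1)] by blast
  next
    assume "\<exists>b\<in>P \<inter> w ` (uminus ` P). \<exists>d\<in>P \<inter> w ` (uminus ` P). a = b + d"
    then obtain b d where bd: "b \<in> P" "b \<in> w ` (uminus ` P)" "d \<in> P" "d \<in> w ` (uminus ` P)" "a = b + d"
      by blast
    have h: "b \<noteq> a \<and> refl a b \<notin> P \<and> phi a b = d" using decomp[OF a bd(1) bd(3) bd(5)] .
    then have "b \<in> ?C" using bd(1) by blast
    moreover have "Xw w b = 1" "Xw w (phi a b) = 1" using h bd(2,4) by (simp_all add: Xw_def)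
    ultimately show "\<exists>g\<in>?C. Xw w g = 1 \<and> Xw w (phi a g) = 1" by blast
  qed
  finally show ?thesis .
qed

lemma main2:
  assumes w: "w \<in> weyl_group R" and a: "a \<in> P" and aP: "a \<in> w ` P"
  shows "int (weyl_length D (refl a \<circ> w)) = int (weyl_length D w) + 1 \<longleftrightarrow>
     \<not> (\<exists>b\<in>P \<inter> w ` P. \<exists>d\<in>P \<inter> w ` P. a = b + d)"
proof -
  let ?C = "{g\<in>P. refl a g \<notin> P} - {a}"
  let ?t = "\<lambda>g. 1 - Xw w g - Xw w (phi a g)"
  have aR: "a \<in> R" using a P_sub by auto
  have finC: "finite ?C" using finP by simp
  have Xa: "Xw w a = 0" using aP compl(1)[OF w aR] by (simp add: Xw_def)
  have XP: "Xw w x = 0 \<longleftrightarrow> x \<in> w ` P" if "x \<in> R" for x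
    using compl(1)[OF w that] by (simp add: Xw_def)
  have tnn: "?t g \<ge> 0" if g: "g \<in> ?C" for g
  proof (rule ccontr)
    assume "\<not> ?t g \<ge> 0"
    then have "Xw w g = 1" "Xw w (phi a g) = 1" using Xw_cases[of w g] Xw_cases[of w "phi a g"] by auto
    then have "g \<in> w ` (uminus ` P)" "phi a g \<in> w ` (uminus ` P)" by (auto simp: Xw_def split: if_splits)
    then have "a \<in> w ` (uminus ` P)" using add_Q[OF w] Cp_struct(3)[OF a g] aR by metis
    then show False using compl(1)[OF w aR] aP by simp
  qed
  have "int (weyl_length D (refl a \<circ> w)) = int (weyl_length D w) + 1 \<longleftrightarrow> (\<Sum>g\<in>?C. ?t g) = 0"
    using sum_rewrite[OF w a] Xa by simp
  also have "\<dots> \<longleftrightarrow> (\<forall>g\<in>?C. ?t g = 0)"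
    using finC tnn by (intro sum_nonneg_eq_0_iff) auto
  also have "\<dots> \<longleftrightarrow> \<not> (\<exists>g\<in>?C. Xw w g = 0 \<and> Xw w (phi a g) = 0)"
  proof -
    have "?t g = 0 \<longleftrightarrow> \<not> (Xw w g = 0 \<and> Xw w (phi a g) = 0)" if "g \<in> ?C" for g
      using tnn[OF that] Xw_cases[of w g] Xw_cases[of w "phi a g"] by auto
    then show ?thesis by blast
  qed
  also have "(\<exists>g\<in>?C. Xw w g = 0 \<and> Xw w (phi a g) = 0) \<longleftrightarrow>
     (\<exists>b\<in>P \<inter> w ` P. \<exists>d\<in>P \<inter> w ` P. a = b + d)"
  proof
    assume "\<exists>g\<in>?C. Xw w g = 0 \<and> Xw w (phi a g) = 0"
    then obtain g where g: "g \<in> ?C" "Xw w g = 0" "Xw w (phi a g) = 0" by blast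
    have "g \<in> R" "phi a g \<in> R" using Cp_struct[OF a g(1)] P_sub by auto
    then have "g \<in> w ` P" "phi a g \<in> w ` P" using g XP by auto
    then show "\<exists>b\<in>P \<inter> w ` P. \<exists>d\<in>P \<inter> w ` P. a = b + d"
      using Cp_struct[OF a g(1)] by blast
  next
    assume "\<exists>b\<in>P \<inter> w ` P. \<exists>d\<in>P \<inter> w ` P. a = b + d"
    then obtain b d where bd: "b \<in> P" "b \<in> w ` P" "d \<in> P" "d \<in> w ` P" "a = b + d"
      by blast
    have "b \<noteq> a \<and> refl a b \<notin> P \<and> phi a b = d" using decomp[OF a bd(1) bd(3) bd(5)] .
    moreover have "Xw w b = 0" "Xw w d = 0" using XP bd P_sub by auto
    ultimately show "\<exists>g\<in>?C. Xw w g = 0 \<and> Xw w (phi a g) = 0" using bd by auto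
  qed
  finally show ?thesis .
qed

end

end

theorem mainTheorem14:
  fixes R P D :: "'a::euclidean_space set" and w :: "'a \<Rightarrow> 'a" and \<alpha> :: 'a
  assumes "simply_laced_root_system R"
    and "positive_system R P"
    and "simple_system P D"
    and "w \<in> weyl_group R"
  shows "(\<alpha> \<in> P \<inter> w ` (uminus ` P) \<longrightarrow>
           (int (weyl_length D (refl \<alpha> \<circ> w)) = int (weyl_length D w) - 1 \<longleftrightarrow>
            \<not> (\<exists>\<beta>\<in>P \<inter> w ` (uminus ` P). \<exists>\<delta>\<in>P \<inter> w ` (uminus ` P). \<alpha> = \<beta> + \<delta>)))
       \<and> (\<alpha> \<in> P \<inter> w ` P \<longrightarrow>
           (int (weyl_length D (refl \<alpha> \<circ> w)) = int (weyl_length D w) + 1 \<longleftrightarrow>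
            \<not> (\<exists>\<beta>\<in>P \<inter> w ` P. \<exists>\<delta>\<in>P \<inter> w ` P. \<alpha> = \<beta> + \<delta>)))"
proof -
  have rs: "root_system R" and red: "reduced R" and eql: "\<forall>a\<in>R. \<forall>b\<in>R. a \<bullet> a = b \<bullet> b"
    using assms(1) unfolding simply_laced_root_system_def by blast+
  obtain v where v: "\<forall>a\<in>R. v \<bullet> a \<noteq> 0" "P = {a\<in>R. v \<bullet> a > 0}"
    using assms(2) unfolding positive_system_def by blast
  have intc: "\<forall>a\<in>R. \<forall>b\<in>R. (2 * (b \<bullet> a)) / (a \<bullet> a) \<in> \<int>"
    using rs unfolding root_system_def by blast
  have f1: "finite R" and f2: "0 \<notin> R" and f3: "\<forall>a\<in>R. refl a ` R = R"
    using rs unfolding root_system_def by blast+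
  interpret rsys R P D v by (rule rsys.intro[OF f1 f2 f3 red v(1) v(2) assms(3)])
  show ?thesis
  proof (intro conjI impI)
    assume h: "\<alpha> \<in> P \<inter> w ` (uminus ` P)"
    show "int (weyl_length D (refl \<alpha> \<circ> w)) = int (weyl_length D w) - 1 \<longleftrightarrow>
            \<not> (\<exists>\<beta>\<in>P \<inter> w ` (uminus ` P). \<exists>\<delta>\<in>P \<inter> w ` (uminus ` P). \<alpha> = \<beta> + \<delta>)"
      by (rule main1[OF intc eql assms(4)]) (use h in blast)+
  next
    assume h: "\<alpha> \<in> P \<inter> w ` P"
    show "int (weyl_length D (refl \<alpha> \<circ> w)) = int (weyl_length D w) + 1 \<longleftrightarrow>
            \<not> (\<exists>\<beta>\<in>P \<inter> w ` P. \<exists>\<delta>\<in>P \<inter> w ` P. \<alpha> = \<beta> + \<delta>)"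
      by (rule main2[OF intc eql assms(4)]) (use h in blast)+
  qed
qed

end
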